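(* For all $l\in\mathbb{N}$ the coefficients of the expansion in the context satisfy $$\tilde c_{4l-3,\,1-2l}=0,\qquad \tilde c_{4l-1,\,-2l}=\Big(-\frac14\Big)^{l-1}l\,\tilde c_{3,-2}^{\,l}=-\frac{l\,b^{2l}(a^2+1)^l}{4^{2l-1}}.$$ Equivalently, $\sum_{n\ge0}\tilde c_{2n-1,-n}x^n=\dfrac{Cx^2}{(1+Cx^2/4)^2}$ with $C=\tilde c_{3,-2}=-b^2(a^2+1)/4$.
   Context: Consider the degenerate third Painlevé equation with $\varepsilon=+1$: $u''=\frac{(u')^2}{u}-\frac{u'}{\tau}+\frac{1}{\tau}(-8u^2+2ab)+\frac{b^2}{u}$, where $b\in\mathbb{R}\setminus\{0\}$, $a\in\mathbb{C}$. It has a one-parameter family of solutions, defined for $|\arg\tau|<\pi$ with the principal branch of $\ln$, admitting the expansion (convergent near $\tau=0$) $$u(\tau)=\sum_{k=0}^{\infty}\tau^{2k-1}\sum_{m=-2\lfloor k/2\rfloor}^{\infty}\tilde c_{2k-1,m}(\ln\tau)^{-m},\qquad \tilde c_{-1,0}=\tilde c_{-1,1}=0,\ \tilde c_{-1,2}=-\tfrac14,$$ where $\tilde c_{-1,3}\in\mathbb{C}$ is a free parameter and all other coefficients $\tilde c_{2k-1,m}$ are uniquely determined by $\tilde c_{-1,3}$, $a$, $b$ by substituting the expansion into the equation (coefficients with $m<-2\lfloor k/2\rfloor$ are zero). *)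

theory Defs
  imports Complex_Main
begin

text \<open>A coefficient family c k m stands for the coefficient of tau^(2k-1) (ln tau)^(-m).
  More generally, a graded series F :: nat => int => complex stands for
  sum_k tau^(p0 + 2k) sum_m F k m (ln tau)^(-m), where in every component k only
  finitely many negative m occur (m >= -k).\<close>

text \<open>Product of two graded series (Cauchy product in k, Laurent product in m).
  The m-window is exact for series whose k-th component is supported in m >= -k.\<close>
definition gconv :: "(nat \<Rightarrow> int \<Rightarrow> complex) \<Rightarrow> (nat \<Rightarrow> int \<Rightarrow> complex) \<Rightarrow> nat \<Rightarrow> int \<Rightarrow> complex" where
  "gconv F G n m = (\<Sum>k\<le>n. \<Sum>i\<in>{- int n .. m + int n}. F k i * G (n - k) (m - i))"

text \<open>The Euler operator theta = tau d/dtau on u = sum_k tau^(2k-1) sum_m c k m (ln tau)^(-m):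
  theta (tau^p L^(-m)) = p tau^p L^(-m) - m tau^p L^(-m-1).\<close>
definition theta_op :: "(nat \<Rightarrow> int \<Rightarrow> complex) \<Rightarrow> nat \<Rightarrow> int \<Rightarrow> complex" where
  "theta_op F k m = (2 * of_nat k - 1) * F k m - of_int (m - 1) * F k (m - 1)"

text \<open>The formal degenerate PIII (eps = +1), multiplied by tau^2 u:
  u theta^2 u - (theta u)^2 = tau (-8 u^3 + 2 a b u) + b^2 tau^2.
  Coefficient of tau^(2n-2) (ln tau)^(-m).\<close>
definition dP3_formal :: "complex \<Rightarrow> real \<Rightarrow> (nat \<Rightarrow> int \<Rightarrow> complex) \<Rightarrow> bool" where
  "dP3_formal a b c \<longleftrightarrow>
     (\<forall>n m. gconv c (theta_op (theta_op c)) n m - gconv (theta_op c) (theta_op c) n m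
        = - 8 * gconv (gconv c c) c n m
          + (if n \<ge> 1 then 2 * a * complex_of_real b * c (n - 1) m else 0)
          + (if n = 2 \<and> m = 0 then (complex_of_real b)^2 else 0))"

text \<open>The one-parameter family of coefficients of the context: c k m = tilde c_{2k-1,m}.\<close>
definition dP3_coeffs :: "complex \<Rightarrow> real \<Rightarrow> (nat \<Rightarrow> int \<Rightarrow> complex) \<Rightarrow> bool" where
  "dP3_coeffs a b c \<longleftrightarrow>
     c 0 0 = 0 \<and> c 0 1 = 0 \<and> c 0 2 = - 1/4 \<and>
     (\<forall>k m. m < - 2 * int (k div 2) \<longrightarrow> c k m = 0) \<and>
     dP3_formal a b c"

end

theory Submission
  imports Defs "HOL-Computational_Algebra.Formal_Power_Series"
begin
unbundle fps_syntax

definition Dop :: "complex fps \<Rightarrow> complex fps" where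
  "Dop A = fps_X * fps_deriv A"

lemma Dop_nth [simp]: "Dop A $ n = of_nat n * A $ n"
  by (cases n) (simp_all add: Dop_def)

lemma Dop_mult: "Dop (A * B) = Dop A * B + A * Dop B"
  unfolding Dop_def by (simp add: algebra_simps)

lemma Dop_add: "Dop (A + B) = Dop A + Dop B"
  unfolding Dop_def by (simp add: algebra_simps)

lemma Dop_diff: "Dop (A - B) = Dop A - Dop B"
  unfolding Dop_def by (simp add: algebra_simps)

lemma Dop_const_mult: "Dop (fps_const x * A) = fps_const x * Dop A"
  unfolding Dop_def by (simp add: algebra_simps)

lemma Dop_const: "Dop (fps_const x) = 0"
  unfolding Dop_def by simp

definition Th :: "complex fps \<Rightarrow> complex fps" where
  "Th A = fps_const 2 * Dop A - A"

lemma Th_nth [simp]: "Th A $ n = (2 * of_nat n - 1) * A $ n"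
  unfolding Th_def by (simp add: algebra_simps)

lemma mult_low:
  fixes A B :: "complex fps"
  assumes "\<forall>k<s. A $ k = 0"
  shows "(A * B) $ (s + j) = (\<Sum>i\<le>j. A $ (s + i) * B $ (j - i))"
proof -
  have "(A * B) $ (s + j) = (\<Sum>i\<in>{0..<s + (j+1)}. A$i * B$(s + j - i))"
    by (simp add: fps_mult_nth atLeastLessThanSuc_atLeastAtMost)
  also have "\<dots> = (\<Sum>i\<in>{0..<s}. A$i * B$(s + j - i)) + (\<Sum>i\<in>{s..<s + (j+1)}. A$i * B$(s + j - i))"
    by (rule sum.atLeastLessThan_concat[symmetric]) auto
  also have "(\<Sum>i\<in>{0..<s}. A$i * B$(s + j - i)) = 0"
    using assms by simp
  also have "(\<Sum>i\<in>{s..<s + (j+1)}. A$i * B$(s + j - i)) = (\<Sum>i\<in>{0..<j+1}. A$(i+s) * B$(s + j - (i+s)))"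
    using sum.shift_bounds_nat_ivl[of "\<lambda>i. A$i * B$(s + j - i)" 0 s "j+1"] by (simp add: add.commute)
  also have "\<dots> = (\<Sum>i\<le>j. A $ (s + i) * B $ (j - i))"
    by (simp add: atLeast0LessThan lessThan_Suc_atMost add.commute)
  finally show ?thesis by simp
qed

lemma mult_low0:
  fixes A B :: "complex fps"
  assumes "\<forall>k<s. A $ k = 0"
  shows "(A * B) $ s = A $ s * B $ 0" "(B * A) $ s = A $ s * B $ 0"
  using mult_low[OF assms, of B 0] mult_low[OF assms, of B 0] by (simp_all add: mult.commute)

lemma mult_low1:
  fixes A B :: "complex fps"
  assumes "\<forall>k<s. A $ k = 0"
  shows "(A * B) $ Suc s = A $ s * B $ 1 + A $ Suc s * B $ 0"
        "(B * A) $ Suc s = A $ s * B $ 1 + A $ Suc s * B $ 0"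
  using mult_low[OF assms, of B 1] by (simp_all add: mult.commute)

lemma mult_low2:
  fixes A B :: "complex fps"
  assumes "\<forall>k<s. A $ k = 0"
  shows "(A * B) $ Suc (Suc s) = A $ s * B $ 2 + A $ Suc s * B $ 1 + A $ Suc (Suc s) * B $ 0"
        "(B * A) $ Suc (Suc s) = A $ s * B $ 2 + A $ Suc s * B $ 1 + A $ Suc (Suc s) * B $ 0"
  using mult_low[OF assms, of B 2] by (simp_all add: mult.commute numeral_2_eq_2)

lemma mult_low_zero:
  fixes A B :: "complex fps"
  assumes "\<forall>k<s. A $ k = 0" "n < s"
  shows "(A * B) $ n = 0" "(B * A) $ n = 0"
  using assms by (auto simp: fps_mult_nth intro!: sum.neutral)


definition supp :: "(nat \<Rightarrow> int \<Rightarrow> complex) \<Rightarrow> bool" where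
  "supp F \<longleftrightarrow> (\<forall>k m. m < - int k \<longrightarrow> F k m = 0)"

definition S0 :: "(nat \<Rightarrow> int \<Rightarrow> complex) \<Rightarrow> complex fps" where
  "S0 F = Abs_fps (\<lambda>k. F k (- int k))"
definition S1 :: "(nat \<Rightarrow> int \<Rightarrow> complex) \<Rightarrow> complex fps" where
  "S1 F = Abs_fps (\<lambda>k. F k (1 - int k))"

lemma S0_nth [simp]: "S0 F $ k = F k (- int k)" by (simp add: S0_def)
lemma S1_nth [simp]: "S1 F $ k = F k (1 - int k)" by (simp add: S1_def)

lemma suppD: "supp F \<Longrightarrow> m < - int k \<Longrightarrow> F k m = 0"
  unfolding supp_def by blast

lemma supp_theta: "supp F \<Longrightarrow> supp (theta_op F)"
  unfolding supp_def theta_op_def by auto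

lemma sum_one:
  assumes "finite S" "a \<in> S" "\<forall>i\<in>S. i \<noteq> a \<longrightarrow> f i = 0"
  shows "sum f S = f a"
proof -
  have "sum f S = f a + sum f (S - {a})" using assms by (simp add: sum.remove)
  also have "sum f (S - {a}) = 0" using assms by (intro sum.neutral) auto
  finally show ?thesis by simp
qed

lemma sum_two:
  assumes "finite S" "a \<in> S" "b \<in> S" "a \<noteq> b" "\<forall>i\<in>S. i \<noteq> a \<and> i \<noteq> b \<longrightarrow> f i = 0"
  shows "sum f S = f a + f b"
proof -
  have "sum f S = f a + sum f (S - {a})" using assms by (simp add: sum.remove)
  also have "sum f (S - {a}) = f b + sum f (S - {a} - {b})" using assms by (intro sum.remove) auto
  also have "sum f (S - {a} - {b}) = 0" using assms by (intro sum.neutral) auto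
  finally show ?thesis by simp
qed

lemma supp_gconv:
  assumes F: "supp F" and G: "supp G"
  shows "supp (gconv F G)"
  unfolding supp_def gconv_def
proof (intro allI impI)
  fix n :: nat and m :: int
  assume m: "m < - int n"
  show "(\<Sum>k\<le>n. \<Sum>i\<in>{- int n..m + int n}. F k i * G (n - k) (m - i)) = 0"
  proof (intro sum.neutral ballI)
    fix k i assume k: "k \<in> {..n}" and i: "i \<in> {- int n..m + int n}"
    show "F k i * G (n - k) (m - i) = 0"
    proof (cases "i < - int k")
      case True then show ?thesis using suppD[OF F] by simp
    next
      case False
      then have "m - i < - int (n - k)" using m k by auto
      then show ?thesis using suppD[OF G] by simp
    qed
  qed
qed

lemma S0_theta: "supp F \<Longrightarrow> S0 (theta_op F) = Th (S0 F)"
  by (intro fps_ext) (simp add: theta_op_def suppD)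

lemma S1_theta: "supp F \<Longrightarrow> S1 (theta_op F) = Th (S1 F) + Dop (S0 F)"
  by (intro fps_ext) (simp add: theta_op_def suppD algebra_simps)

lemma S0_gconv:
  assumes F: "supp F" and G: "supp G"
  shows "S0 (gconv F G) = S0 F * S0 G"
proof (intro fps_ext)
  fix n
  have "gconv F G n (- int n) = (\<Sum>k\<le>n. F k (- int k) * G (n - k) (- int (n - k)))"
    unfolding gconv_def
  proof (intro sum.cong refl)
    fix k assume k: "k \<in> {..n}"
    show "(\<Sum>i\<in>{- int n..- int n + int n}. F k i * G (n - k) (- int n - i)) = F k (- int k) * G (n - k) (- int (n - k))"
    proof (subst sum_one[where a = "- int k"])
      show "\<forall>i\<in>{- int n..- int n + int n}. i \<noteq> - int k \<longrightarrow> F k i * G (n - k) (- int n - i) = 0"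
      proof (intro ballI impI)
        fix i assume i: "i \<in> {- int n..- int n + int n}" "i \<noteq> - int k"
        show "F k i * G (n - k) (- int n - i) = 0"
        proof (cases "i < - int k")
          case True then show ?thesis using suppD[OF F] by simp
        next
          case False
          then have "- int n - i < - int (n - k)" using i k by auto
          then show ?thesis using suppD[OF G] by simp
        qed
      qed
    qed (use k in auto)
  qed
  then show "S0 (gconv F G) $ n = (S0 F * S0 G) $ n"
    by (simp add: fps_mult_nth atLeast0AtMost)
qed

lemma S1_gconv:
  assumes F: "supp F" and G: "supp G"
  shows "S1 (gconv F G) = S0 F * S1 G + S1 F * S0 G"
proof (intro fps_ext)
  fix n
  have "gconv F G n (1 - int n) = (\<Sum>k\<le>n. F k (- int k) * G (n - k) (1 - int (n - k)) + F k (1 - int k) * G (n - k) (- int (n - k)))"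
    unfolding gconv_def
  proof (intro sum.cong refl)
    fix k assume k: "k \<in> {..n}"
    show "(\<Sum>i\<in>{- int n..1 - int n + int n}. F k i * G (n - k) (1 - int n - i)) = F k (- int k) * G (n - k) (1 - int (n - k)) + F k (1 - int k) * G (n - k) (- int (n - k))"
    proof (subst sum_two[where a = "- int k" and b = "1 - int k"])
      show "\<forall>i\<in>{- int n..1 - int n + int n}. i \<noteq> - int k \<and> i \<noteq> 1 - int k \<longrightarrow> F k i * G (n - k) (1 - int n - i) = 0"
      proof (intro ballI impI)
        fix i assume i: "i \<in> {- int n..1 - int n + int n}" "i \<noteq> - int k \<and> i \<noteq> 1 - int k"
        show "F k i * G (n - k) (1 - int n - i) = 0"
        proof (cases "i < - int k")
          case True then show ?thesis using suppD[OF F] by simp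
        next
          case False
          then have "1 - int n - i < - int (n - k)" using i k by auto
          then show ?thesis using suppD[OF G] by simp
        qed
      qed
    qed (use k in \<open>auto simp: of_nat_diff algebra_simps\<close>)
  qed
  then show "S1 (gconv F G) $ n = (S0 F * S1 G + S1 F * S0 G) $ n"
    by (simp add: fps_mult_nth atLeast0AtMost sum.distrib)
qed


lemma coeffs_supp: "dP3_coeffs a b c \<Longrightarrow> supp c"
  unfolding dP3_coeffs_def supp_def
proof (intro allI impI, elim conjE)
  fix k m assume m: "m < - int k" and h: "\<forall>k m. m < - 2 * int (k div 2) \<longrightarrow> c k m = 0"
  have "2 * int (k div 2) \<le> int k" by linarith
  then show "c k m = 0" using h m by force
qed

lemma eq0:
  assumes H: "dP3_coeffs a b c"
  shows "S0 c * Th (Th (S0 c)) - Th (S0 c) * Th (S0 c) = fps_const (-8) * (S0 c * S0 c * S0 c)"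
proof -
  have s: "supp c" using coeffs_supp[OF H] .
  have s1: "supp (theta_op c)" using supp_theta[OF s] .
  have s2: "supp (theta_op (theta_op c))" using supp_theta[OF s1] .
  have s3: "supp (gconv c c)" using supp_gconv[OF s s] .
  have F: "dP3_formal a b c" using H unfolding dP3_coeffs_def by blast
  have "S0 (gconv c (theta_op (theta_op c))) - S0 (gconv (theta_op c) (theta_op c))
        = fps_const (-8) * S0 (gconv (gconv c c) c)"
  proof (intro fps_ext)
    fix n
    have "gconv c (theta_op (theta_op c)) n (- int n) - gconv (theta_op c) (theta_op c) n (- int n)
        = - 8 * gconv (gconv c c) c n (- int n)
          + (if n \<ge> 1 then 2 * a * complex_of_real b * c (n - 1) (- int n) else 0)
          + (if n = 2 \<and> - int n = 0 then (complex_of_real b)^2 else 0)"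
      using F unfolding dP3_formal_def by blast
    moreover have "n \<ge> 1 \<Longrightarrow> c (n - 1) (- int n) = 0" by (rule suppD[OF s]) auto
    ultimately show "(S0 (gconv c (theta_op (theta_op c))) - S0 (gconv (theta_op c) (theta_op c))) $ n
        = (fps_const (-8) * S0 (gconv (gconv c c) c)) $ n" by auto
  qed
  then show ?thesis
    by (simp add: S0_gconv s s1 s2 s3 S0_theta)
qed

lemma eq1:
  assumes H: "dP3_coeffs a b c"
  shows "S0 c * (Th (Th (S1 c) + Dop (S0 c)) + Dop (Th (S0 c))) + S1 c * Th (Th (S0 c))
         - (Th (S0 c) * (Th (S1 c) + Dop (S0 c)) + (Th (S1 c) + Dop (S0 c)) * Th (S0 c))
       = fps_const (-8) * (S0 c * S0 c * S1 c + (S0 c * S1 c + S1 c * S0 c) * S0 c)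
         + fps_const (2 * a * complex_of_real b) * (fps_X * S0 c)"
proof -
  have s: "supp c" using coeffs_supp[OF H] .
  have s1: "supp (theta_op c)" using supp_theta[OF s] .
  have s2: "supp (theta_op (theta_op c))" using supp_theta[OF s1] .
  have s3: "supp (gconv c c)" using supp_gconv[OF s s] .
  have F: "dP3_formal a b c" using H unfolding dP3_coeffs_def by blast
  have "S1 (gconv c (theta_op (theta_op c))) - S1 (gconv (theta_op c) (theta_op c))
        = fps_const (-8) * S1 (gconv (gconv c c) c) + fps_const (2 * a * complex_of_real b) * (fps_X * S0 c)"
  proof (intro fps_ext)
    fix n
    have "gconv c (theta_op (theta_op c)) n (1 - int n) - gconv (theta_op c) (theta_op c) n (1 - int n)
        = - 8 * gconv (gconv c c) c n (1 - int n)
          + (if n \<ge> 1 then 2 * a * complex_of_real b * c (n - 1) (1 - int n) else 0)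
          + (if n = 2 \<and> 1 - int n = 0 then (complex_of_real b)^2 else 0)"
      using F unfolding dP3_formal_def by blast
    moreover have "n \<ge> 1 \<Longrightarrow> c (n - 1) (1 - int n) = c (n - 1) (- int (n - 1))" by (simp add: of_nat_diff)
    ultimately show "(S1 (gconv c (theta_op (theta_op c))) - S1 (gconv (theta_op c) (theta_op c))) $ n
        = (fps_const (-8) * S1 (gconv (gconv c c) c) + fps_const (2 * a * complex_of_real b) * (fps_X * S0 c)) $ n"
      by auto
  qed
  then show ?thesis
    by (simp add: S0_gconv S1_gconv s s1 s2 s3 S0_theta S1_theta)
qed


lemma ivl_m1_3: "{- 1..3::int} = {-1,0,1,2,3}" by auto
lemma ivl_m2_2: "{- 2..2::int} = {-2,-1,0,1,2}" by auto
lemma ivl_m1_1: "{- 1..1::int} = {-1,0,1}" by auto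
lemma ivl_m1_0: "{- 1..0::int} = {-1,0}" by auto
lemma ivl_m2_0: "{- 2..0::int} = {-2,-1,0}" by auto
lemma ivl_m2_1: "{- 2..1::int} = {-2,-1,0,1}" by auto
lemma ivl_m1_2: "{- 1..2::int} = {-1,0,1,2}" by auto
lemma ivl_m2_m1: "{- 2..-1::int} = {-2,-1}" by auto
lemma ivl_0_0: "{0..0::int} = {0}" by auto
lemma ivl_0_1: "{0..1::int} = {0,1}" by auto
lemma ivl_0_2: "{0..2::int} = {0,1,2}" by auto
lemma nivl_0_1: "{0..1::nat} = {0,1}" by auto
lemma nivl_0_2: "{0..2::nat} = {0,1,2}" by auto
lemmas ivls = ivl_m1_1 ivl_m1_0 ivl_m2_0 ivl_m2_1 ivl_m1_2 ivl_m2_m1 ivl_0_0 ivl_0_1 ivl_0_2 nivl_0_1 nivl_0_2 ivl_m1_3 ivl_m2_2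
lemma atMost1: "{..Suc 0} = {0, Suc 0}" by auto
lemma atMost2: "{..2::nat} = {0, 1, 2}" by auto

lemma c10:
  assumes H: "dP3_coeffs a b c"
  shows "c 1 0 = a * complex_of_real b / 2"
proof -
  have z: "\<And>k m. m < - 2 * int (k div 2) \<Longrightarrow> c k m = 0" and c00: "c 0 0 = 0" and c01: "c 0 1 = 0"
    and c02: "c 0 2 = - 1/4" and F: "dP3_formal a b c"
    using H unfolding dP3_coeffs_def by auto
  have z0: "m < 0 \<Longrightarrow> c 0 m = 0" for m using z[of m 0] by simp
  have z1: "m < 0 \<Longrightarrow> c 1 m = 0" for m using z[of m 1] by simp
  have e: "gconv c (theta_op (theta_op c)) 1 2 - gconv (theta_op c) (theta_op c) 1 2
        = - 8 * gconv (gconv c c) c 1 2 + 2 * a * complex_of_real b * c 0 2"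
    using F unfolding dP3_formal_def by (erule_tac x=1 in allE, erule_tac x=2 in allE) simp
  have z1': "m < 0 \<Longrightarrow> c (Suc 0) m = 0" for m using z1 by simp
  from e have "c (Suc 0) 0 * 2 = a * complex_of_real b"
    unfolding gconv_def
    apply (simp add: atMost1 ivl_m1_3)
    apply (simp add: theta_op_def z0 z1' c00 c01 c02)
    apply (simp add: ivls z0 z1' c00 c01 c02)
    done
  then show ?thesis by simp
qed

lemma c2m2:
  assumes H: "dP3_coeffs a b c"
  shows "c 2 (-2) = - ((complex_of_real b)^2 * (a^2 + 1)) / 4"
proof -
  have z: "\<And>k m. m < - 2 * int (k div 2) \<Longrightarrow> c k m = 0" and c00: "c 0 0 = 0" and c01: "c 0 1 = 0"
    and c02: "c 0 2 = - 1/4" and F: "dP3_formal a b c"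
    using H unfolding dP3_coeffs_def by auto
  have z0: "m < 0 \<Longrightarrow> c 0 m = 0" for m using z[of m 0] by simp
  have z1': "m < 0 \<Longrightarrow> c (Suc 0) m = 0" for m using z[of m 1] by simp
  have z2: "m < -2 \<Longrightarrow> c (Suc (Suc 0)) m = 0" for m using z[of m 2] by (simp add: numeral_2_eq_2)
  have c10': "c (Suc 0) 0 = a * complex_of_real b / 2" using c10[OF H] by simp
  have e: "gconv c (theta_op (theta_op c)) 2 0 - gconv (theta_op c) (theta_op c) 2 0
        = - 8 * gconv (gconv c c) c 2 0 + 2 * a * complex_of_real b * c 1 0 + (complex_of_real b)^2"
    using F unfolding dP3_formal_def by (erule_tac x=2 in allE, erule_tac x=0 in allE) simp
  from e have "- (4 * c (Suc (Suc 0)) (- 2)) = a * (complex_of_real b * (a * complex_of_real b)) + complex_of_real b * complex_of_real b"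
    unfolding gconv_def
    apply (simp add: atMost2 ivl_m2_2)
    apply (simp add: theta_op_def z0 z1' z2 c00 c01 c02 c10' numeral_2_eq_2)
    apply (simp add: ivls z0 z1' z2 c00 c01 c02 c10')
    done
  then have "4 * c (Suc (Suc 0)) (- 2) = - (a * (complex_of_real b * (a * complex_of_real b)) + complex_of_real b * complex_of_real b)"
    by (metis minus_minus)
  also have "\<dots> = - ((complex_of_real b)^2 * (a^2 + 1))" by (simp add: power2_eq_square algebra_simps)
  finally have "4 * c 2 (- 2) = - ((complex_of_real b)^2 * (a^2 + 1))" by (simp add: numeral_2_eq_2)
  then show ?thesis by (simp add: field_simps)
qed

lemma Gc_ident: "(- 1/4) ^ (q + 2) * of_nat (q + 3) * C ^ (q + 3) + C/2 * ((- 1/4) ^ (q + 1) * of_nat (q + 2) * C ^ (q + 2)) + C^2/16 * ((- 1/4) ^ q * of_nat (q + 1) * C ^ (q + 1)) = (0::complex)"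
proof -
  have "(- 1/4) ^ (q + 2) * of_nat (q + 3) * C ^ (q + 3) + C/2 * ((- 1/4) ^ (q + 1) * of_nat (q + 2) * C ^ (q + 2)) + C^2/16 * ((- 1/4) ^ q * of_nat (q + 1) * C ^ (q + 1))
     = ((- 1/4) ^ q * C ^ q * C^3) * ((of_nat q + 3) / 16 - (of_nat q + 2) / 8 + (of_nat q + 1) / 16)"
    unfolding power_add by (simp add: field_simps power2_eq_square power3_eq_cube; algebra)
  also have "(of_nat q + 3) / 16 - (of_nat q + 2) / 8 + (of_nat q + 1) / 16 = (0::complex)"
    by (simp add: field_simps)
  finally show ?thesis by simp
qed

definition Gc :: "complex \<Rightarrow> complex fps" where
  "Gc C = Abs_fps (\<lambda>n. if even n then (- 1/4) ^ (n div 2 - 1) * of_nat (n div 2) * C ^ (n div 2) else 0)"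

definition Qc :: "complex \<Rightarrow> complex fps" where
  "Qc C = 1 + fps_const (C/4) * fps_X ^ 2"

lemma Gc_nth: "Gc C $ n = (if even n then (- 1/4) ^ (n div 2 - 1) * of_nat (n div 2) * C ^ (n div 2) else 0)"
  by (simp add: Gc_def)

lemma QQ: "Qc C * Qc C = 1 + fps_const (C/2) * fps_X ^ 2 + fps_const (C^2/16) * fps_X ^ 4"
proof -
  have "Qc C * Qc C = 1 + (2 * fps_const (C/4)) * fps_X ^ 2 + (fps_const (C/4) * fps_const (C/4)) * (fps_X ^ 2 * fps_X ^ 2)"
    unfolding Qc_def by algebra
  also have "2 * fps_const (C/4) = fps_const (C/2)" by (simp add: numeral_fps_const)
  also have "fps_const (C/4) * fps_const (C/4) = fps_const (C^2/16)" by (simp add: power2_eq_square)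
  also have "(fps_X ^ 2 * fps_X ^ 2 :: complex fps) = fps_X ^ 4" by (simp add: power_add[symmetric])
  finally show ?thesis .
qed

lemma QQG: "Qc C * Qc C * Gc C = fps_const C * fps_X ^ 2"
proof (intro fps_ext)
  fix n
  have "(Qc C * Qc C * Gc C) $ n = Gc C $ n + C/2 * (if n < 2 then 0 else Gc C $ (n - 2)) + C^2/16 * (if n < 4 then 0 else Gc C $ (n - 4))"
    unfolding QQ distrib_right mult.assoc by (simp add: fps_X_power_mult_nth)
  also have "\<dots> = (if n = 2 then C else 0)"
  proof (cases "even n")
    case False
    then have "odd (n - 2)" "odd (n - 4)" if "n \<ge> 4" using that by auto
    moreover have "odd (n - 2)" if "n \<ge> 2" using that False by auto
    ultimately show ?thesis using False by (auto simp: Gc_nth)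
  next
    case True
    then obtain p where p: "n = 2 * p" by blast
    have "p = 0 \<or> p = 1 \<or> p = 2 \<or> (\<exists>q. p = q + 3)" by presburger
    then consider "p = 0" | "p = 1" | "p = 2" | q where "p = q + 3" by blast
    then show ?thesis
    proof cases
      case 1 then show ?thesis using p by (simp add: Gc_nth)
    next
      case 2 then show ?thesis using p by (simp add: Gc_nth)
    next
      case 3
      then have "n = 4" "n - 2 = 2" "n - 4 = 0" using p by auto
      then show ?thesis by (simp add: Gc_nth power2_eq_square)
    next
      case 4
      have e1: "n - 2 = 2 * (q + 2)" "n - 4 = 2 * (q + 1)" "n div 2 = q + 3" using p 4 by auto
      have "Gc C $ n + C/2 * Gc C $ (n - 2) + C^2/16 * Gc C $ (n - 4)
          = 0"
      proof -
        have A: "Gc C $ n = (- 1/4) ^ (q + 2) * of_nat (q + 3) * C ^ (q + 3)"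
          using p 4 by (simp add: Gc_nth)
        moreover have B: "Gc C $ (n - 2) = (- 1/4) ^ (q + 1) * of_nat (q + 2) * C ^ (q + 2)"
          using e1 by (simp add: Gc_nth)
        moreover have D: "Gc C $ (n - 4) = (- 1/4) ^ q * of_nat (q + 1) * C ^ (q + 1)"
          using e1 by (simp add: Gc_nth)
        ultimately show ?thesis by (simp only: A B D Gc_ident)
      qed
      then show ?thesis using p 4 by simp
    qed
  qed
  also have "\<dots> = (fps_const C * fps_X ^ 2) $ n" by simp
  finally show "(Qc C * Qc C * Gc C) $ n = (fps_const C * fps_X ^ 2) $ n" .
qed


lemma Qc_nth: "Qc C $ n = (if n = 0 then 1 else 0) + (if n = 2 then C/4 else 0)"
  by (simp add: Qc_def)

lemma Dop_Q: "Dop (Qc C) = 2 * (Qc C - 1)"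
  by (intro fps_ext) (simp add: Qc_nth numeral_fps_const)

lemma P_Q: "fps_const C * fps_X ^ 2 = 4 * (Qc C - 1)"
  by (intro fps_ext) (simp add: Qc_nth numeral_fps_const)

lemma Dop_one: "Dop 1 = 0"
  by (intro fps_ext) simp

lemma Dop_num: "Dop (numeral k * A) = numeral k * Dop A"
  by (simp add: numeral_fps_const Dop_const_mult)

lemma Dop_numeral: "Dop (numeral k) = 0"
  by (simp add: numeral_fps_const Dop_const)

lemma "Dop 8 = 0" by (simp only: Dop_numeral)
lemma "Dop (8::complex fps) = 0" by (simp only: Dop_numeral)
lemma Th_alt: "Th A = 2 * Dop A - A"
  by (simp add: Th_def numeral_fps_const)

lemma Gc_liouville: "Gc C * Th (Th (Gc C)) - Th (Gc C) * Th (Gc C) = fps_const (-8) * (Gc C * Gc C * Gc C)"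
proof -
  define q where "q = Qc C"
  define g where "g = Gc C"
  define g1 where "g1 = Dop g"
  define g2 where "g2 = Dop g1"
  have h0: "q * q * g = 4 * (q - 1)" unfolding q_def g_def using QQG[of C] P_Q[of C] by simp
  have dq: "Dop q = 2 * (q - 1)" unfolding q_def by (rule Dop_Q)
  have "Dop (q * q * g) = Dop (4 * (q - 1))" using h0 by simp
  then have h1: "2 * (q - 1) * q * g + q * (2 * (q - 1)) * g + q * q * g1 = 4 * (2 * (q - 1))"
    apply (simp add: Dop_mult Dop_num Dop_diff Dop_one Dop_numeral dq g1_def)
    by algebra
  have eqD: "Dop (2 * (q - 1) * q * g + q * (2 * (q - 1)) * g + q * q * g1) = Dop (4 * (2 * (q - 1)))"
    using h1 by simp
  have lhs: "Dop (2 * (q - 1) * q * g + q * (2 * (q - 1)) * g + q * q * g1) =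
       2 * (2 * (q - 1)) * q * g + 2 * (q - 1) * (2 * (q - 1)) * g + 2 * (q - 1) * q * g1
       + ((2 * (q - 1)) * (2 * (q - 1)) * g + q * (2 * (2 * (q - 1))) * g + q * (2 * (q - 1)) * g1)
       + ((2 * (q - 1)) * q * g1 + q * (2 * (q - 1)) * g1 + q * q * g2)"
    apply (simp add: Dop_mult Dop_num Dop_diff Dop_one Dop_numeral Dop_add dq g1_def g2_def)
    by algebra
  have rhs: "Dop (4 * (2 * (q - 1))) = 4 * (2 * (2 * (q - 1)))"
    by (simp add: Dop_num Dop_diff Dop_one dq Dop_numeral)
  have h2: "2 * (2 * (q - 1)) * q * g + 2 * (q - 1) * (2 * (q - 1)) * g + 2 * (q - 1) * q * g1
       + ((2 * (q - 1)) * (2 * (q - 1)) * g + q * (2 * (2 * (q - 1))) * g + q * (2 * (q - 1)) * g1)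
       + ((2 * (q - 1)) * q * g1 + q * (2 * (q - 1)) * g1 + q * q * g2) = 4 * (2 * (2 * (q - 1)))"
    using eqD lhs rhs by simp
  have key: "q ^ 6 * (g * g2 - g1 * g1 + 2 * g * g * g) = 0"
    using h0 h1 h2 by algebra
  have "q \<noteq> 0" unfolding q_def
  proof
    assume "Qc C = 0"
    then have "Qc C $ 0 = 0" by simp
    then show False by (simp add: Qc_nth)
  qed
  then have "g * g2 - g1 * g1 + 2 * g * g * g = 0" using key by simp
  moreover have "Th g = 2 * g1 - g" "Th (Th g) = 4 * g2 - 4 * g1 + g"
    by (simp_all only: Th_alt g1_def g2_def Dop_diff Dop_num) algebra+
  moreover have m8: "fps_const (-8) = (-8::complex fps)" by (simp add: numeral_fps_const)
  ultimately show ?thesis unfolding g_def[symmetric] m8 by algebra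
qed


lemma num_nth: "(numeral k * X) $ n = numeral k * (X $ n :: complex)"
  by (simp add: numeral_fps_const)

lemma Th_add: "Th (A + B) = Th A + Th B"
  by (simp add: Th_def Dop_add algebra_simps)

lemma low_Th: "\<forall>k<s. A $ k = 0 \<Longrightarrow> \<forall>k<s. Th A $ k = 0"
  by simp

definition Liou :: "complex fps \<Rightarrow> bool" where
  "Liou X \<longleftrightarrow> X * Th (Th X) - Th X * Th X = fps_const (-8) * (X * X * X)"

lemma liou_unique:
  assumes LF: "Liou F" and LG: "Liou G"
    and F0: "F $ 0 = 0" and G0: "G $ 0 = 0" and F1: "F $ 1 = 0" and G1: "G $ 1 = 0"
    and F2: "F $ 2 = C" and G2: "G $ 2 = C" and C: "C \<noteq> 0"
  shows "F = G"
proof -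
  have "\<forall>k<n. F $ k = G $ k" for n
  proof (induction n)
    case 0 then show ?case by simp
  next
    case (Suc n)
    show ?case
    proof (intro allI impI)
      fix k assume "k < Suc n"
      then consider "k < n" | "k = n" by linarith
      then show "F $ k = G $ k"
      proof cases
        case 1 then show ?thesis using Suc.IH by blast
      next
        case 2
        show ?thesis
        proof (cases "n \<ge> 3")
          case False
          then have "n = 0 \<or> n = 1 \<or> n = 2" by linarith
          then show ?thesis using 2 F0 G0 F1 G1 F2 G2 by auto
        next
          case True
          define H where "H = F - G"
          have lowH: "\<forall>k<n. H $ k = 0" using Suc.IH by (simp add: H_def)
          have FGH: "F = G + H" by (simp add: H_def)
          have lowTH: "\<forall>k<n. Th H $ k = 0" and lowTTH: "\<forall>k<n. Th (Th H) $ k = 0"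
            using lowH by simp_all
          have h012: "H $ 0 = 0" "H $ Suc 0 = 0" "H $ 2 = 0" using lowH True by auto
          have lowG: "\<forall>k<2. G $ k = 0" using G0 G1 by (auto simp: less_2_cases_iff)
          have m8: "fps_const (-8) = (-8::complex fps)" by (simp add: numeral_fps_const)
          have E: "G * Th (Th H) + H * Th (Th G) + H * Th (Th H) - 2 * (Th G * Th H) - Th H * Th H
                   + 8 * (3 * (G * G * H) + 3 * ((G * H) * H) + (H * H) * H) = 0"
          proof -
            have a: "F * Th (Th F) - Th F * Th F = -8 * (F * F * F)" using LF m8 by (simp add: Liou_def)
            have b: "G * Th (Th G) - Th G * Th G = -8 * (G * G * G)" using LG m8 by (simp add: Liou_def)
            have c: "Th F = Th G + Th H" "Th (Th F) = Th (Th G) + Th (Th H)" by (simp_all add: FGH Th_add)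
            have a': "(G + H) * (Th (Th G) + Th (Th H)) - (Th G + Th H) * (Th G + Th H) = -8 * ((G + H) * (G + H) * (G + H))"
              using a c FGH by simp
            have "G * Th (Th H) + H * Th (Th G) + H * Th (Th H) - 2 * (Th G * Th H) - Th H * Th H
                   + 8 * (3 * (G * G * H) + 3 * ((G * H) * H) + (H * H) * H)
                 = ((G + H) * (Th (Th G) + Th (Th H)) - (Th G + Th H) * (Th G + Th H) - -8 * ((G + H) * (G + H) * (G + H)))
                   - (G * Th (Th G) - Th G * Th G - -8 * (G * G * G))"
              by (simp add: algebra_simps)
            then show ?thesis using a' b by simp
          qed
          define m where "m = n - 2"
          have m: "n = Suc (Suc m)" "m \<ge> 1" using True by (simp_all add: m_def)
          have "(G * Th (Th H) + H * Th (Th G) + H * Th (Th H) - 2 * (Th G * Th H) - Th H * Th H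
                   + 8 * (3 * (G * G * H) + 3 * ((G * H) * H) + (H * H) * H)) $ Suc (Suc n) = 0"
            using E by simp
          then have "(G * Th (Th H)) $ Suc (Suc n) + (H * Th (Th G)) $ Suc (Suc n) + (H * Th (Th H)) $ Suc (Suc n)
              - 2 * (Th G * Th H) $ Suc (Suc n) - (Th H * Th H) $ Suc (Suc n)
              + 8 * (3 * (G * G * H) $ Suc (Suc n) + 3 * ((G * H) * H) $ Suc (Suc n) + ((H * H) * H) $ Suc (Suc n)) = 0"
            by (simp only: fps_add_nth fps_sub_nth num_nth)
          moreover have "(G * Th (Th H)) $ Suc (Suc n) = (2 * of_nat n - 1)^2 * H $ n * C"
            using mult_low2(2)[OF lowTTH, of G] G0 G1 G2 by (simp add: power2_eq_square)
          moreover have "(H * Th (Th G)) $ Suc (Suc n) = H $ n * (9 * C)"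
            using mult_low2(1)[OF lowH, of "Th (Th G)"] G0 G1 G2 by simp
          moreover have "(H * Th (Th H)) $ Suc (Suc n) = 0"
            using mult_low2(1)[OF lowH, of "Th (Th H)"] h012 by simp
          moreover have "(Th G * Th H) $ Suc (Suc n) = (2 * of_nat n - 1) * H $ n * (3 * C)"
            using mult_low2(2)[OF lowTH, of "Th G"] G0 G1 G2 by simp
          moreover have "(Th H * Th H) $ Suc (Suc n) = 0"
            using mult_low2(1)[OF lowTH, of "Th H"] h012 by simp
          moreover have "(G * G * H) $ Suc (Suc n) = 0"
          proof -
            have "(G * G) $ 2 = 0" using mult_low0(1)[OF lowG, of G] G0 by simp
            moreover have "(G * G) $ j = 0" if "j < 2" for j using mult_low_zero(1)[OF lowG that] by simp
            ultimately show ?thesis using mult_low2(2)[OF lowH, of "G * G"] G0 by simp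
          qed
          moreover have "((G * H) * H) $ Suc (Suc n) = 0"
          proof -
            have "(G * H) $ j = 0" if "j < n" for j using mult_low_zero(2)[OF lowH that] by simp
            then show ?thesis using mult_low2(2)[OF lowH, of "G * H"] m G0 h012 by simp
          qed
          moreover have "((H * H) * H) $ Suc (Suc n) = 0"
          proof -
            have "(H * H) $ j = 0" if "j < n" for j using mult_low_zero(1)[OF lowH that] by simp
            then show ?thesis using mult_low2(2)[OF lowH, of "H * H"] m h012 by simp
          qed
          ultimately have "(2 * of_nat n - 1)^2 * H $ n * C + H $ n * (9 * C) + 0 - 2 * ((2 * of_nat n - 1) * H $ n * (3 * C)) - 0 + 8 * (3 * 0 + 3 * 0 + 0) = 0"
            by (simp only:)
          moreover have "(2 * of_nat n - 1)^2 * H $ n * C + H $ n * (9 * C) + 0 - 2 * ((2 * of_nat n - 1) * H $ n * (3 * C)) - 0 + 8 * (3 * 0 + 3 * 0 + 0)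
             = C * H $ n * (2 * of_nat n - 4 :: complex)^2"
            by (simp add: power2_eq_square algebra_simps)
          moreover have "(2 * of_nat n - 4 :: complex) \<noteq> 0"
          proof
            assume "(2 * of_nat n - 4 :: complex) = 0"
            then have "(of_nat (2 * n) :: complex) = of_nat 4" by simp
            then have "2 * n = 4" using of_nat_eq_iff by blast
            then show False using True by simp
          qed
          ultimately have "H $ n = 0" using C by simp
          then show ?thesis using 2 by (simp add: H_def)
        qed
      qed
    qed
  qed
  then show ?thesis by (intro fps_ext) blast
qed


lemma final_ident:
  fixes y :: complex
  assumes "l \<ge> 1"
  shows "(- 1/4) ^ (l - 1) * of_nat l * (- y / 4) ^ l = - of_nat l * y ^ l / 4 ^ (2 * l - 1)"
proof -
  obtain j where l: "l = Suc j" using assms by (cases l) auto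
  have 1: "- y / 4 = (- 1/4) * y" "(- 1/4 :: complex) = - (1/4)" by simp_all
  have 2: "(- 1/4::complex) ^ j * ((- 1/4) * y) ^ Suc j = (- 1/4) ^ (j + Suc j) * y ^ Suc j"
    by (simp only: power_mult_distrib power_add mult.assoc)
  have 3: "(- (1/4)::complex) ^ (2 * l - 1) = - (1 / 4 ^ (2 * l - 1))"
    by (subst power_minus_odd) (simp_all add: power_one_over l)
  have 4: "j + Suc j = 2 * l - 1" using l by simp
  have "(- 1/4 :: complex) ^ (l - 1) * of_nat l * (- y / 4) ^ l = of_nat l * ((- 1/4::complex) ^ j * ((- 1/4) * y) ^ Suc j)"
    using l 1 by (simp only: diff_Suc_1 mult.commute mult.left_commute)
  also have "\<dots> = of_nat l * ((- 1/4) ^ (j + Suc j) * y ^ Suc j)"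
    by (simp only: 2)
  also have "(- 1/4::complex) ^ (j + Suc j) = - (1 / 4 ^ (2 * l - 1))"
    by (simp only: 1(2) 3 4)
  also have "y ^ Suc j = y ^ l" using l by simp
  also have "of_nat l * (- (1 / 4 ^ (2 * l - 1)) * y ^ l) = - of_nat l * y ^ l / (4::complex) ^ (2 * l - 1)" by simp
  finally show ?thesis .
qed


lemma zero_case:
  assumes H: "dP3_coeffs a b c" and b: "b \<noteq> 0" and C0: "c 2 (-2) = 0"
  shows "S0 c $ n = 0"
proof -
  have s: "supp c" using coeffs_supp[OF H] .
  have c00: "c 0 0 = 0" and c01: "c 0 1 = 0" using H unfolding dP3_coeffs_def by auto
  have "(complex_of_real b)^2 * (a^2 + 1) = 0" using c2m2[OF H] C0 by simp
  then have "a^2 + 1 = 0" using b by simp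
  then have a0: "a \<noteq> 0" by auto
  have ab: "a * complex_of_real b \<noteq> 0" using a0 b by simp
  define F where "F = S0 c"
  define E where "E = S1 c"
  define Z where "Z = Th E + Dop F"
  define Y where "Y = Th Z + Dop (Th F)"
  have EQ: "F * Y + E * Th (Th F) - (Th F * Z + Z * Th F)
       = fps_const (-8) * (F * F * E + (F * E + E * F) * F) + fps_const (2 * a * complex_of_real b) * (fps_X * F)"
    using eq1[OF H] unfolding F_def E_def Z_def Y_def .
  have E0: "E $ 0 = 0" using c01 by (simp add: E_def)
  have E1: "E $ 1 = a * complex_of_real b / 2" using c10[OF H] by (simp add: E_def)
  have F0: "F $ 0 = 0" using c00 by (simp add: F_def)
  have F1: "F $ 1 = 0"
  proof -
    have "\<forall>k m. m < - 2 * int (k div 2) \<longrightarrow> c k m = 0" using H unfolding dP3_coeffs_def by blast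
    then have "c 1 (-1) = 0" by (erule_tac x=1 in allE, erule_tac x="-1" in allE) simp
    then show ?thesis by (simp add: F_def)
  qed
  have F2: "F $ 2 = 0" using C0 by (simp add: F_def)
  have "\<forall>k<n. F $ k = 0" for n
  proof (induction n)
    case 0 then show ?case by simp
  next
    case (Suc n)
    have "F $ n = 0"
    proof (cases "n \<ge> 3")
      case False
      then have "n = 0 \<or> n = 1 \<or> n = 2" by linarith
      then show ?thesis using F0 F1 F2 by auto
    next
      case True
      have low: "\<forall>k<n. F $ k = 0" using Suc.IH .
      have lowT: "\<forall>k<n. Th F $ k = 0" "\<forall>k<n. Th (Th F) $ k = 0" using low by simp_all
      have Z0: "Z $ 0 = 0" and Z1: "Z $ 1 = E $ 1" using E0 F1 by (simp_all add: Z_def)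
      have Y0: "Y $ 0 = 0" and Y1: "Y $ 1 = E $ 1" using Z0 Z1 F1 by (simp_all add: Y_def)
      have "(F * Y + E * Th (Th F) - (Th F * Z + Z * Th F)) $ Suc n
          = (fps_const (-8) * (F * F * E + (F * E + E * F) * F) + fps_const (2 * a * complex_of_real b) * (fps_X * F)) $ Suc n"
        using EQ by simp
      then have "(F * Y) $ Suc n + (E * Th (Th F)) $ Suc n - ((Th F * Z) $ Suc n + (Z * Th F) $ Suc n)
          = -8 * (((F * F) * E) $ Suc n + ((F * E + E * F) * F) $ Suc n) + 2 * a * complex_of_real b * F $ n"
        by (simp only: fps_add_nth fps_sub_nth fps_mult_left_const_nth fps_X_mult_nth Suc_neq_Zero if_False diff_Suc_1) simp
      moreover have "(F * Y) $ Suc n = F $ n * E $ 1"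
        using mult_low1(1)[OF low, of Y] Y0 Y1 by simp
      moreover have "(E * Th (Th F)) $ Suc n = (2 * of_nat n - 1)^2 * F $ n * E $ 1"
        using mult_low1(2)[OF lowT(2), of E] E0 by (simp add: power2_eq_square)
      moreover have "(Th F * Z) $ Suc n = (2 * of_nat n - 1) * F $ n * E $ 1"
        using mult_low1(1)[OF lowT(1), of Z] Z0 Z1 by simp
      moreover have "(Z * Th F) $ Suc n = (2 * of_nat n - 1) * F $ n * E $ 1"
        using mult_low1(2)[OF lowT(1), of Z] Z0 Z1 by simp
      moreover have "((F * F) * E) $ Suc n = 0"
      proof -
        have l2: "\<forall>k<n. (F * F) $ k = 0" using mult_low_zero(1)[OF low] by blast
        have "(F * F) $ n = 0" using mult_low0(1)[OF low, of F] F0 by simp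
        then show ?thesis using mult_low1(1)[OF l2, of E] E0 by simp
      qed
      moreover have "((F * E + E * F) * F) $ Suc n = 0"
        using mult_low1(2)[OF low, of "F * E + E * F"] F0 F1 E0 by simp
      ultimately have "F $ n * E $ 1 + (2 * of_nat n - 1)^2 * F $ n * E $ 1
            - ((2 * of_nat n - 1) * F $ n * E $ 1 + (2 * of_nat n - 1) * F $ n * E $ 1)
          = -8 * (0 + 0) + 2 * a * complex_of_real b * F $ n"
        by (simp only:)
      moreover have "F $ n * E $ 1 + (2 * of_nat n - 1)^2 * F $ n * E $ 1
            - ((2 * of_nat n - 1) * F $ n * E $ 1 + (2 * of_nat n - 1) * F $ n * E $ 1)
            - (-8 * (0 + 0) + 2 * a * complex_of_real b * F $ n)
          = 2 * (a * complex_of_real b) * F $ n * (of_nat n * (of_nat n - 2))"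
        unfolding E1 by (simp add: power2_eq_square algebra_simps)
      ultimately have "2 * (a * complex_of_real b) * F $ n * (of_nat n * (of_nat n - 2)) = 0"
        by simp
      moreover have "(of_nat n :: complex) \<noteq> 0" "(of_nat n - 2 :: complex) \<noteq> 0"
      proof -
        show "(of_nat n :: complex) \<noteq> 0" using True by simp
        show "(of_nat n - 2 :: complex) \<noteq> 0"
        proof
          assume "(of_nat n - 2 :: complex) = 0"
          then have "(of_nat n :: complex) = of_nat 2" by simp
          then have "n = 2" using of_nat_eq_iff by blast
          then show False using True by simp
        qed
      qed
      ultimately show ?thesis using ab by simp
    qed
    then show ?case using Suc.IH less_Suc_eq by auto
  qed
  then show ?thesis unfolding F_def by blast
qed


theorem mainTheorem4:
  fixes a :: complex and b :: real and c :: "nat \<Rightarrow> int \<Rightarrow> complex" and l :: nat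
  assumes "b \<noteq> 0"
    and "dP3_coeffs a b c"
    and "l \<ge> 1"
  shows "c (2 * l - 1) (1 - 2 * int l) = 0
       \<and> c (2 * l) (- 2 * int l) = (- 1/4) ^ (l - 1) * of_nat l * (c 2 (-2)) ^ l
       \<and> c (2 * l) (- 2 * int l)
           = - of_nat l * (complex_of_real b) ^ (2 * l) * (a^2 + 1) ^ l / 4 ^ (2 * l - 1)"
proof -
  note H = assms(2)
  have z: "\<forall>k m. m < - 2 * int (k div 2) \<longrightarrow> c k m = 0" and c00: "c 0 0 = 0"
    using H unfolding dP3_coeffs_def by blast+
  obtain j where l: "l = Suc j" using assms(3) by (cases l) auto
  have part1: "c (2 * l - 1) (1 - 2 * int l) = 0"
  proof -
    have "(2 * l - 1) div 2 = j" using l by simp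
    moreover have "1 - 2 * int l < - 2 * int j" using l by simp
    ultimately show ?thesis using z by metis
  qed
  define C where "C = c 2 (-2)"
  have c11: "c 1 (-1) = 0" using z by (erule_tac x=1 in allE, erule_tac x="-1" in allE) simp
  have e2l: "- 2 * int l = - int (2 * l)" by simp
  have main2: "c (2 * l) (- 2 * int l) = (- 1/4) ^ (l - 1) * of_nat l * C ^ l"
  proof (cases "C = 0")
    case True
    have "S0 c $ (2 * l) = 0" using zero_case[OF H assms(1)] True unfolding C_def by blast
    then have "c (2 * l) (- int (2 * l)) = 0" unfolding S0_nth .
    then have "c (2 * l) (- 2 * int l) = 0" unfolding e2l .
    then show ?thesis using True l by simp
  next
    case False
    have LF: "Liou (S0 c)" using eq0[OF H] by (simp add: Liou_def)
    have LG: "Liou (Gc C)" using Gc_liouville[of C] by (simp add: Liou_def)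
    have "S0 c = Gc C"
    proof (rule liou_unique[OF LF LG])
      show "S0 c $ 0 = 0" using c00 by simp
      show "Gc C $ 0 = 0" by (simp add: Gc_nth)
      show "S0 c $ 1 = 0" using c11 by simp
      show "Gc C $ 1 = 0" by (simp add: Gc_nth)
      show "S0 c $ 2 = C" by (simp add: C_def)
      show "Gc C $ 2 = C" by (simp add: Gc_nth)
      show "C \<noteq> 0" using False .
    qed
    then have "c (2 * l) (- int (2 * l)) = Gc C $ (2 * l)" by (metis S0_nth)
    also have "\<dots> = (- 1/4) ^ (l - 1) * of_nat l * C ^ l" by (simp add: Gc_nth)
    finally show ?thesis using e2l by simp
  qed
  have Cv: "C = - ((complex_of_real b)^2 * (a^2 + 1)) / 4" using c2m2[OF H] by (simp add: C_def)
  have main3: "c (2 * l) (- 2 * int l)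
           = - of_nat l * (complex_of_real b) ^ (2 * l) * (a^2 + 1) ^ l / 4 ^ (2 * l - 1)"
  proof -
    have "c (2 * l) (- 2 * int l) = - of_nat l * ((complex_of_real b)^2 * (a^2 + 1)) ^ l / 4 ^ (2 * l - 1)"
      using main2 Cv final_ident[OF assms(3), of "(complex_of_real b)^2 * (a^2 + 1)"] by simp
    also have "((complex_of_real b)^2 * (a^2 + 1)) ^ l = (complex_of_real b) ^ (2 * l) * (a^2 + 1) ^ l"
      by (simp add: power_mult_distrib power_mult)
    finally show ?thesis by (simp add: mult.assoc)
  qed
  show ?thesis using part1 main2 main3 by (simp add: C_def)
qed

end
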